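(* Let $A_\bullet$ be a simplicial commutative ring, and let $a,b\in N_n(A)$ and $c\in A_{n-1}$. Then: (1) $s_1s_0(c)\,m(a,b)\in N_{n+1}(A)$; (2) if $d_0(a)c=0=d_0(b)c$, then $s_1s_0(c)\,m(a,b)$ is a cycle; (3) if $d_0(a)c=0$ and $b$ is a boundary, then $s_1s_0(c)\,m(a,b)$ is a boundary.
   Context: For a simplicial ring $A_\bullet$ and $a,b\in A_n$ put $m(a,b)=s_0(a)s_1(b)-s_0(b)s_1(a)\in A_{n+1}$. $N_n(A)=\bigcap_{1\le i\le n}\ker(d_i:A_n\to A_{n-1})$ is the normalized chain complex with differential $d_0$; cycles and boundaries refer to this complex. *)

theory Defs
  imports "HOL-Algebra.Ring" "HOL-Algebra.RingHom"
begin

text \<open>A simplicial commutative ring, given levelwise by commutative rings R n (= A_n),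
face maps d n i : A_n -> A_(n-1) (for n >= 1, i <= n) and degeneracy maps
s n i : A_n -> A_(n+1) (for i <= n), all ring homomorphisms, satisfying the
simplicial identities (on carriers).\<close>

definition simplicial_cring ::
  "(nat \<Rightarrow> ('a, 'b) ring_scheme) \<Rightarrow> (nat \<Rightarrow> nat \<Rightarrow> 'a \<Rightarrow> 'a) \<Rightarrow> (nat \<Rightarrow> nat \<Rightarrow> 'a \<Rightarrow> 'a) \<Rightarrow> bool"
where
  "simplicial_cring R d s \<longleftrightarrow>
     (\<forall>n. cring (R n)) \<and>
     (\<forall>n i. i \<le> Suc n \<longrightarrow> d (Suc n) i \<in> ring_hom (R (Suc n)) (R n)) \<and>
     (\<forall>n i. i \<le> n \<longrightarrow> s n i \<in> ring_hom (R n) (R (Suc n))) \<and>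
     \<comment> \<open>d_i d_j = d_(j-1) d_i for i < j\<close>
     (\<forall>n i j x. i < j \<and> j \<le> n + 2 \<and> x \<in> carrier (R (n + 2)) \<longrightarrow>
        d (n + 1) i (d (n + 2) j x) = d (n + 1) (j - 1) (d (n + 2) i x)) \<and>
     \<comment> \<open>d_i s_j = s_(j-1) d_i for i < j\<close>
     (\<forall>n i j x. i < j \<and> j \<le> n + 1 \<and> x \<in> carrier (R (n + 1)) \<longrightarrow>
        d (n + 2) i (s (n + 1) j x) = s n (j - 1) (d (n + 1) i x)) \<and>
     \<comment> \<open>d_j s_j = id = d_(j+1) s_j\<close>
     (\<forall>n j x. j \<le> n \<and> x \<in> carrier (R n) \<longrightarrow>
        d (n + 1) j (s n j x) = x \<and> d (n + 1) (j + 1) (s n j x) = x) \<and>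
     \<comment> \<open>d_i s_j = s_j d_(i-1) for i > j + 1\<close>
     (\<forall>n i j x. j + 1 < i \<and> i \<le> n + 2 \<and> x \<in> carrier (R (n + 1)) \<longrightarrow>
        d (n + 2) i (s (n + 1) j x) = s n j (d (n + 1) (i - 1) x)) \<and>
     \<comment> \<open>s_i s_j = s_(j+1) s_i for i <= j\<close>
     (\<forall>n i j x. i \<le> j \<and> j \<le> n \<and> x \<in> carrier (R n) \<longrightarrow>
        s (n + 1) i (s n j x) = s (n + 1) (j + 1) (s n i x))"

definition normalized ::
  "(nat \<Rightarrow> ('a, 'b) ring_scheme) \<Rightarrow> (nat \<Rightarrow> nat \<Rightarrow> 'a \<Rightarrow> 'a) \<Rightarrow> nat \<Rightarrow> 'a set"
where
  "normalized R d n = {x \<in> carrier (R n). \<forall>i. 1 \<le> i \<and> i \<le> n \<longrightarrow> d n i x = \<zero>\<^bsub>R (n - 1)\<^esub>}"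

definition is_cycle ::
  "(nat \<Rightarrow> ('a, 'b) ring_scheme) \<Rightarrow> (nat \<Rightarrow> nat \<Rightarrow> 'a \<Rightarrow> 'a) \<Rightarrow> nat \<Rightarrow> 'a \<Rightarrow> bool"
where
  "is_cycle R d n x \<longleftrightarrow> x \<in> normalized R d n \<and> (0 < n \<longrightarrow> d n 0 x = \<zero>\<^bsub>R (n - 1)\<^esub>)"

definition is_boundary ::
  "(nat \<Rightarrow> ('a, 'b) ring_scheme) \<Rightarrow> (nat \<Rightarrow> nat \<Rightarrow> 'a \<Rightarrow> 'a) \<Rightarrow> nat \<Rightarrow> 'a \<Rightarrow> bool"
where
  "is_boundary R d n x \<longleftrightarrow> (\<exists>y \<in> normalized R d (Suc n). d (Suc n) 0 y = x)"

definition mprod ::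
  "(nat \<Rightarrow> ('a, 'b) ring_scheme) \<Rightarrow> (nat \<Rightarrow> nat \<Rightarrow> 'a \<Rightarrow> 'a) \<Rightarrow> nat \<Rightarrow> 'a \<Rightarrow> 'a \<Rightarrow> 'a"
where
  "mprod R s n a b =
     (s n 0 a \<otimes>\<^bsub>R (Suc n)\<^esub> s n 1 b) \<ominus>\<^bsub>R (Suc n)\<^esub> (s n 0 b \<otimes>\<^bsub>R (Suc n)\<^esub> s n 1 a)"

end

theory Submission
  imports Defs
begin

lemma hom_minus_gen:
  assumes "h \<in> ring_hom A B" "cring A" "cring B" "x \<in> carrier A" "y \<in> carrier A"
  shows "h (x \<ominus>\<^bsub>A\<^esub> y) = h x \<ominus>\<^bsub>B\<^esub> h y"
proof -
  interpret ring_hom_cring A B h using assms by (simp add: ring_hom_cring_def ring_hom_cring_axioms_def)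
  have "h (x \<ominus>\<^bsub>A\<^esub> y) = h (x \<oplus>\<^bsub>A\<^esub> (\<ominus>\<^bsub>A\<^esub> y))" by (simp only: R.minus_eq)
  also have "\<dots> = h x \<oplus>\<^bsub>B\<^esub> h (\<ominus>\<^bsub>A\<^esub> y)" using assms(4,5) by (simp only: hom_add R.a_inv_closed)
  also have "\<dots> = h x \<oplus>\<^bsub>B\<^esub> (\<ominus>\<^bsub>B\<^esub> h y)" using assms(5) by (simp only: hom_a_inv)
  finally show ?thesis by (simp only: S.minus_eq)
qed

context cring begin
lemma H1: "z \<in> carrier R \<Longrightarrow> u \<in> carrier R \<Longrightarrow> v \<in> carrier R \<Longrightarrow> a \<in> carrier R \<Longrightarrow> b \<in> carrier R \<Longrightarrow>
  z \<otimes> u = \<zero> \<Longrightarrow> z \<otimes> v = \<zero> \<Longrightarrow> z \<otimes> (a \<otimes> u \<ominus> b \<otimes> v) = \<zero>"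
  by (simp add: minus_eq r_distr r_minus m_lcomm)
lemma H2: "p \<in> carrier R \<Longrightarrow> y \<in> carrier R \<Longrightarrow> q \<in> carrier R \<Longrightarrow> (p \<otimes> \<zero> \<ominus> y \<otimes> q) \<oplus> y \<otimes> q = \<zero>"
  by (simp add: minus_eq a_assoc a_comm r_neg l_neg)
lemma H3: "p \<in> carrier R \<Longrightarrow> y \<in> carrier R \<Longrightarrow> x \<in> carrier R \<Longrightarrow> (p \<otimes> y \<ominus> y \<otimes> p) \<oplus> \<zero> \<otimes> x = \<zero>"
  by (simp add: minus_eq m_comm r_neg)
lemma H4: "u \<in> carrier R \<Longrightarrow> v \<in> carrier R \<Longrightarrow> x \<in> carrier R \<Longrightarrow> (\<zero> \<otimes> u \<ominus> \<zero> \<otimes> v) \<oplus> \<zero> \<otimes> x = \<zero>"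
  by (simp add: minus_eq)
lemma H5: "c \<in> carrier R \<Longrightarrow> t \<in> carrier R \<Longrightarrow> m \<in> carrier R \<Longrightarrow> y \<in> carrier R \<Longrightarrow> c \<otimes> t = \<zero> \<Longrightarrow>
   c \<otimes> (m \<oplus> y \<otimes> t) = c \<otimes> m"
  by (simp add: r_distr m_lcomm[of c y t])
lemma H6: "a \<in> carrier R \<Longrightarrow> b \<in> carrier R \<Longrightarrow> a \<otimes> b \<ominus> b \<otimes> a = \<zero>"
  by (simp add: minus_eq m_comm r_neg)
lemma H7: "u \<in> carrier R \<Longrightarrow> v \<in> carrier R \<Longrightarrow> \<zero> \<otimes> u \<ominus> \<zero> \<otimes> v = \<zero>"
  by (simp add: minus_eq)
end

locale scr =
  fixes R :: "nat \<Rightarrow> ('a, 'b) ring_scheme" and d s :: "nat \<Rightarrow> nat \<Rightarrow> 'a \<Rightarrow> 'a"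
  assumes scr: "simplicial_cring R d s"
begin

lemma cr: "cring (R n)" using scr by (simp add: simplicial_cring_def)
lemma rg: "ring (R n)" using cr cring.axioms(1) by blast

lemma dhom: "i \<le> Suc n \<Longrightarrow> d (Suc n) i \<in> ring_hom (R (Suc n)) (R n)"
  using scr by (simp add: simplicial_cring_def)
lemma shom: "i \<le> n \<Longrightarrow> s n i \<in> ring_hom (R n) (R (Suc n))"
  using scr by (simp add: simplicial_cring_def)

lemma d_closed[simp]: "i \<le> Suc n \<Longrightarrow> x \<in> carrier (R (Suc n)) \<Longrightarrow> d (Suc n) i x \<in> carrier (R n)"
  by (rule ring_hom_closed[OF dhom])
lemma s_closed[simp]: "i \<le> n \<Longrightarrow> x \<in> carrier (R n) \<Longrightarrow> s n i x \<in> carrier (R (Suc n))"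
  by (rule ring_hom_closed[OF shom])
lemma d_mult[simp]: "i \<le> Suc n \<Longrightarrow> x \<in> carrier (R (Suc n)) \<Longrightarrow> y \<in> carrier (R (Suc n)) \<Longrightarrow>
   d (Suc n) i (x \<otimes>\<^bsub>R (Suc n)\<^esub> y) = d (Suc n) i x \<otimes>\<^bsub>R n\<^esub> d (Suc n) i y"
  by (rule ring_hom_mult[OF dhom])
lemma s_mult[simp]: "i \<le> n \<Longrightarrow> x \<in> carrier (R n) \<Longrightarrow> y \<in> carrier (R n) \<Longrightarrow>
   s n i (x \<otimes>\<^bsub>R n\<^esub> y) = s n i x \<otimes>\<^bsub>R (Suc n)\<^esub> s n i y"
  by (rule ring_hom_mult[OF shom])
lemma d_add[simp]: "i \<le> Suc n \<Longrightarrow> x \<in> carrier (R (Suc n)) \<Longrightarrow> y \<in> carrier (R (Suc n)) \<Longrightarrow>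
   d (Suc n) i (x \<oplus>\<^bsub>R (Suc n)\<^esub> y) = d (Suc n) i x \<oplus>\<^bsub>R n\<^esub> d (Suc n) i y"
  by (rule ring_hom_add[OF dhom])
lemma d_minus[simp]: "i \<le> Suc n \<Longrightarrow> x \<in> carrier (R (Suc n)) \<Longrightarrow> y \<in> carrier (R (Suc n)) \<Longrightarrow>
   d (Suc n) i (x \<ominus>\<^bsub>R (Suc n)\<^esub> y) = d (Suc n) i x \<ominus>\<^bsub>R n\<^esub> d (Suc n) i y"
  by (rule hom_minus_gen[OF dhom cr cr])
lemma d_zero[simp]: "i \<le> Suc n \<Longrightarrow> d (Suc n) i \<zero>\<^bsub>R (Suc n)\<^esub> = \<zero>\<^bsub>R n\<^esub>"
  by (rule ring_hom_zero[OF dhom rg rg])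
lemma s_zero[simp]: "i \<le> n \<Longrightarrow> s n i \<zero>\<^bsub>R n\<^esub> = \<zero>\<^bsub>R (Suc n)\<^esub>"
  by (rule ring_hom_zero[OF shom rg rg])

lemma ds_lt: "i < j \<Longrightarrow> j \<le> Suc n \<Longrightarrow> x \<in> carrier (R (Suc n)) \<Longrightarrow>
  d (Suc (Suc n)) i (s (Suc n) j x) = s n (j - 1) (d (Suc n) i x)"
proof -
  assume a: "i < j" "j \<le> Suc n" "x \<in> carrier (R (Suc n))"
  have H: "\<forall>n i j x. i < j \<and> j \<le> n + 1 \<and> x \<in> carrier (R (n + 1)) \<longrightarrow>
        d (n + 2) i (s (n + 1) j x) = s n (j - 1) (d (n + 1) i x)"
    using scr unfolding simplicial_cring_def by (elim conjE) assumption
  show ?thesis using H[rule_format, of i j n x] a by (simp add: numeral_2_eq_2)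
qed
lemma ds_eq: "j \<le> n \<Longrightarrow> x \<in> carrier (R n) \<Longrightarrow> d (Suc n) j (s n j x) = x \<and> d (Suc n) (Suc j) (s n j x) = x"
proof -
  assume a: "j \<le> n" "x \<in> carrier (R n)"
  have H: "\<forall>n j x. j \<le> n \<and> x \<in> carrier (R n) \<longrightarrow>
        d (n + 1) j (s n j x) = x \<and> d (n + 1) (j + 1) (s n j x) = x"
    using scr unfolding simplicial_cring_def by (elim conjE) assumption
  show ?thesis using H[rule_format, of j n x] a by simp
qed
lemma ds_eq1: "j \<le> n \<Longrightarrow> x \<in> carrier (R n) \<Longrightarrow> d (Suc n) j (s n j x) = x"
  using ds_eq by blast
lemma ds_eq2: "j \<le> n \<Longrightarrow> x \<in> carrier (R n) \<Longrightarrow> d (Suc n) (Suc j) (s n j x) = x"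
  using ds_eq by blast
lemma ds_gt: "Suc j < i \<Longrightarrow> i \<le> Suc (Suc n) \<Longrightarrow> x \<in> carrier (R (Suc n)) \<Longrightarrow>
  d (Suc (Suc n)) i (s (Suc n) j x) = s n j (d (Suc n) (i - 1) x)"
proof -
  assume a: "Suc j < i" "i \<le> Suc (Suc n)" "x \<in> carrier (R (Suc n))"
  have H: "\<forall>n i j x. j + 1 < i \<and> i \<le> n + 2 \<and> x \<in> carrier (R (n + 1)) \<longrightarrow>
        d (n + 2) i (s (n + 1) j x) = s n j (d (n + 1) (i - 1) x)"
    using scr unfolding simplicial_cring_def by (elim conjE) assumption
  show ?thesis using H[rule_format, of j i n x] a by (simp add: numeral_2_eq_2)
qed


lemma main:
  assumes aN: "a \<in> normalized R d (Suc k)" and bN: "b \<in> normalized R d (Suc k)"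
    and cC: "c \<in> carrier (R k)"
  shows "s (Suc k) 1 (s k 0 c) \<otimes>\<^bsub>R (Suc (Suc k))\<^esub> mprod R s (Suc k) a b \<in> normalized R d (Suc (Suc k)) \<and>
         (d (Suc k) 0 a \<otimes>\<^bsub>R k\<^esub> c = \<zero>\<^bsub>R k\<^esub> \<longrightarrow>
         d (Suc k) 0 b \<otimes>\<^bsub>R k\<^esub> c = \<zero>\<^bsub>R k\<^esub> \<longrightarrow>
         is_cycle R d (Suc (Suc k)) (s (Suc k) 1 (s k 0 c) \<otimes>\<^bsub>R (Suc (Suc k))\<^esub> mprod R s (Suc k) a b)) \<and>
         (d (Suc k) 0 a \<otimes>\<^bsub>R k\<^esub> c = \<zero>\<^bsub>R k\<^esub> \<longrightarrow>
         is_boundary R d (Suc k) b \<longrightarrow>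
         is_boundary R d (Suc (Suc k)) (s (Suc k) 1 (s k 0 c) \<otimes>\<^bsub>R (Suc (Suc k))\<^esub> mprod R s (Suc k) a b))"
proof -
  interpret R0: cring "R k" by (rule cr)
  interpret R1: cring "R (Suc k)" by (rule cr)
  interpret R2: cring "R (Suc (Suc k))" by (rule cr)
  interpret R3: cring "R (Suc (Suc (Suc k)))" by (rule cr)
  have aC[simp]: "a \<in> carrier (R (Suc k))" using aN by (simp add: normalized_def)
  have bC[simp]: "b \<in> carrier (R (Suc k))" using bN by (simp add: normalized_def)
  have a0: "d (Suc k) i a = \<zero>\<^bsub>R k\<^esub>" if "1 \<le> i" "i \<le> Suc k" for i
    using aN that by (simp add: normalized_def)
  have b0: "d (Suc k) i b = \<zero>\<^bsub>R k\<^esub>" if "1 \<le> i" "i \<le> Suc k" for i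
    using bN that by (simp add: normalized_def)
  define C where "C = s (Suc k) 1 (s k 0 c)"
  define m where "m = mprod R s (Suc k) a b"
  have CC[simp]: "C \<in> carrier (R (Suc (Suc k)))" unfolding C_def using cC by simp
  have mC[simp]: "m \<in> carrier (R (Suc (Suc k)))" unfolding m_def mprod_def by simp
  have dC0: "d (Suc (Suc k)) 0 C = s k 0 c"
    unfolding C_def using cC by (simp add: ds_lt ds_eq1)
  have d0m: "d (Suc (Suc k)) 0 m = (a \<otimes>\<^bsub>R (Suc k)\<^esub> s k 0 (d (Suc k) 0 b)) \<ominus>\<^bsub>R (Suc k)\<^esub> (b \<otimes>\<^bsub>R (Suc k)\<^esub> s k 0 (d (Suc k) 0 a))"
    unfolding m_def mprod_def by (simp add: ds_lt ds_eq1)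
  have mN: "d (Suc (Suc k)) i m = \<zero>\<^bsub>R (Suc k)\<^esub>" if "1 \<le> i" "i \<le> Suc (Suc k)" for i
  proof (cases "i = 1")
    case True
    then show ?thesis unfolding m_def mprod_def by (simp add: ds_eq1 ds_eq2 R1.H6)
  next
    case False
    then have i: "Suc 0 < i" using that by simp
    have "d (Suc (Suc k)) i (s (Suc k) 0 a) = \<zero>\<^bsub>R (Suc k)\<^esub>"
      using ds_gt[OF i that(2) aC] a0[of "i - 1"] i that by simp
    moreover have "d (Suc (Suc k)) i (s (Suc k) 0 b) = \<zero>\<^bsub>R (Suc k)\<^esub>"
      using ds_gt[OF i that(2) bC] b0[of "i - 1"] i that by simp
    ultimately show ?thesis unfolding m_def mprod_def using that by (simp add: R1.minus_eq)
  qed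
  have xC: "C \<otimes>\<^bsub>R (Suc (Suc k))\<^esub> m \<in> carrier (R (Suc (Suc k)))" by simp
  have P1: "C \<otimes>\<^bsub>R (Suc (Suc k))\<^esub> m \<in> normalized R d (Suc (Suc k))"
    unfolding normalized_def using xC mN by simp
  have P2: "d (Suc k) 0 a \<otimes>\<^bsub>R k\<^esub> c = \<zero>\<^bsub>R k\<^esub> \<longrightarrow>
         d (Suc k) 0 b \<otimes>\<^bsub>R k\<^esub> c = \<zero>\<^bsub>R k\<^esub> \<longrightarrow>
         is_cycle R d (Suc (Suc k)) (C \<otimes>\<^bsub>R (Suc (Suc k))\<^esub> m)"
  proof (intro impI)
    assume ha: "d (Suc k) 0 a \<otimes>\<^bsub>R k\<^esub> c = \<zero>\<^bsub>R k\<^esub>" and hb: "d (Suc k) 0 b \<otimes>\<^bsub>R k\<^esub> c = \<zero>\<^bsub>R k\<^esub>"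
    have u: "s k 0 c \<otimes>\<^bsub>R (Suc k)\<^esub> s k 0 (d (Suc k) 0 b) = \<zero>\<^bsub>R (Suc k)\<^esub>"
      using hb cC by (simp flip: s_mult add: R0.m_comm)
    have v: "s k 0 c \<otimes>\<^bsub>R (Suc k)\<^esub> s k 0 (d (Suc k) 0 a) = \<zero>\<^bsub>R (Suc k)\<^esub>"
      using ha cC by (simp flip: s_mult add: R0.m_comm)
    have "d (Suc (Suc k)) 0 (C \<otimes>\<^bsub>R (Suc (Suc k))\<^esub> m) = \<zero>\<^bsub>R (Suc k)\<^esub>"
      using cC by (simp add: dC0 d0m R1.H1 u v)
    then show "is_cycle R d (Suc (Suc k)) (C \<otimes>\<^bsub>R (Suc (Suc k))\<^esub> m)"
      using P1 by (simp add: is_cycle_def)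
  qed
  have P3: "d (Suc k) 0 a \<otimes>\<^bsub>R k\<^esub> c = \<zero>\<^bsub>R k\<^esub> \<longrightarrow>
         is_boundary R d (Suc k) b \<longrightarrow>
         is_boundary R d (Suc (Suc k)) (C \<otimes>\<^bsub>R (Suc (Suc k))\<^esub> m)"
  proof (intro impI)
    assume ha: "d (Suc k) 0 a \<otimes>\<^bsub>R k\<^esub> c = \<zero>\<^bsub>R k\<^esub>" and hb: "is_boundary R d (Suc k) b"
    then obtain y where yN: "y \<in> normalized R d (Suc (Suc k))" and yb: "d (Suc (Suc k)) 0 y = b"
      unfolding is_boundary_def by blast
    have yC[simp]: "y \<in> carrier (R (Suc (Suc k)))" using yN by (simp add: normalized_def)
    have y0: "d (Suc (Suc k)) i y = \<zero>\<^bsub>R (Suc k)\<^esub>" if "1 \<le> i" "i \<le> Suc (Suc k)" for i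
      using yN that by (simp add: normalized_def)
    define P where "P = s (Suc (Suc k)) 1 (s (Suc k) 0 a)"
    define Q where "Q = s (Suc (Suc k)) 2 (s (Suc k) 0 a)"
    define T where "T = s (Suc (Suc k)) 2 (s (Suc k) 1 a)"
    define Y0 where "Y0 = s (Suc (Suc k)) 0 y"
    define Y1 where "Y1 = s (Suc (Suc k)) 1 y"
    define Y2 where "Y2 = s (Suc (Suc k)) 2 y"
    define w where "w = (P \<otimes>\<^bsub>R (Suc (Suc (Suc k)))\<^esub> Y2 \<ominus>\<^bsub>R (Suc (Suc (Suc k)))\<^esub> Y1 \<otimes>\<^bsub>R (Suc (Suc (Suc k)))\<^esub> Q)
        \<oplus>\<^bsub>R (Suc (Suc (Suc k)))\<^esub> Y0 \<otimes>\<^bsub>R (Suc (Suc (Suc k)))\<^esub> T"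
    define C' where "C' = s (Suc (Suc k)) 2 C"
    have PC[simp]: "P \<in> carrier (R (Suc (Suc (Suc k))))" unfolding P_def by simp
    have QC[simp]: "Q \<in> carrier (R (Suc (Suc (Suc k))))" unfolding Q_def by simp
    have TC[simp]: "T \<in> carrier (R (Suc (Suc (Suc k))))" unfolding T_def by simp
    have Y0C[simp]: "Y0 \<in> carrier (R (Suc (Suc (Suc k))))" unfolding Y0_def by simp
    have Y1C[simp]: "Y1 \<in> carrier (R (Suc (Suc (Suc k))))" unfolding Y1_def by simp
    have Y2C[simp]: "Y2 \<in> carrier (R (Suc (Suc (Suc k))))" unfolding Y2_def by simp
    have C'C[simp]: "C' \<in> carrier (R (Suc (Suc (Suc k))))" unfolding C'_def by simp
    have wC[simp]: "w \<in> carrier (R (Suc (Suc (Suc k))))" unfolding w_def by simp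
    have sa0C: "s (Suc k) 0 a \<in> carrier (R (Suc (Suc k)))" by simp
    have sa1C: "s (Suc k) 1 a \<in> carrier (R (Suc (Suc k)))" by simp
    have "d (Suc (Suc (Suc k))) 1 P = s (Suc k) 0 a" unfolding P_def by (simp add: ds_eq1)
    moreover have "d (Suc (Suc (Suc k))) 1 Y2 = \<zero>\<^bsub>R (Suc (Suc k))\<^esub>"
      unfolding Y2_def using ds_lt[of 1 2 "Suc k" y] y0[of 1] by simp
    moreover have "d (Suc (Suc (Suc k))) 1 Y1 = y" unfolding Y1_def by (simp add: ds_eq1)
    moreover have "d (Suc (Suc (Suc k))) 1 Q = s (Suc k) 1 a"
      unfolding Q_def using ds_lt[of 1 2 "Suc k" "s (Suc k) 0 a"] ds_eq2[of 0 "Suc k" a] by simp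
    moreover have "d (Suc (Suc (Suc k))) 1 Y0 = y" unfolding Y0_def using ds_eq2[of 0 "Suc (Suc k)" y] by simp
    moreover have "d (Suc (Suc (Suc k))) 1 T = s (Suc k) 1 a"
      unfolding T_def using ds_lt[of 1 2 "Suc k" "s (Suc k) 1 a"] ds_eq1[of 1 "Suc k" a] by simp
    ultimately have w1: "d (Suc (Suc (Suc k))) 1 w = \<zero>\<^bsub>R (Suc (Suc k))\<^esub>"
      unfolding w_def by (simp add: R2.minus_eq R2.a_assoc R2.l_neg)
    have "d (Suc (Suc (Suc k))) 2 P = s (Suc k) 0 a" unfolding P_def using ds_eq2[of 1 "Suc (Suc k)"] by (simp add: numeral_2_eq_2)
    moreover have "d (Suc (Suc (Suc k))) 2 Y2 = y" unfolding Y2_def by (simp add: ds_eq1)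
    moreover have "d (Suc (Suc (Suc k))) 2 Y1 = y" unfolding Y1_def using ds_eq2[of 1 "Suc (Suc k)" y] by (simp add: numeral_2_eq_2)
    moreover have "d (Suc (Suc (Suc k))) 2 Q = s (Suc k) 0 a" unfolding Q_def by (simp add: ds_eq1)
    moreover have "d (Suc (Suc (Suc k))) 2 Y0 = \<zero>\<^bsub>R (Suc (Suc k))\<^esub>"
      unfolding Y0_def using ds_gt[of 0 2 "Suc k" y] y0[of 1] by simp
    ultimately have w2: "d (Suc (Suc (Suc k))) 2 w = \<zero>\<^bsub>R (Suc (Suc k))\<^esub>"
      unfolding w_def by (simp add: R2.H6)
    have w3: "d (Suc (Suc (Suc k))) i w = \<zero>\<^bsub>R (Suc (Suc k))\<^esub>" if "3 \<le> i" "i \<le> Suc (Suc (Suc k))" for i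
    proof -
      have i1: "Suc 1 < i" "Suc 0 < i - 1" "i - 1 \<le> Suc (Suc k)" "1 \<le> i - 1 - 1" "i - 1 - 1 \<le> Suc k"
        "1 \<le> i - 1"  using that by auto
      have "d (Suc (Suc k)) (i - 1) (s (Suc k) 0 a) = \<zero>\<^bsub>R (Suc k)\<^esub>"
        using ds_gt[OF i1(2) i1(3) aC] a0[OF i1(4) i1(5)] by simp
      then have "d (Suc (Suc (Suc k))) i P = \<zero>\<^bsub>R (Suc (Suc k))\<^esub>"
        unfolding P_def using ds_gt[OF i1(1) that(2) sa0C] by simp
      moreover have "d (Suc (Suc (Suc k))) i Y1 = \<zero>\<^bsub>R (Suc (Suc k))\<^esub>"
        unfolding Y1_def using ds_gt[OF i1(1) that(2) yC] y0[OF i1(6) i1(3)] by simp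
      moreover have "Suc 0 < i" using that by simp
      then have "d (Suc (Suc (Suc k))) i Y0 = \<zero>\<^bsub>R (Suc (Suc k))\<^esub>"
        unfolding Y0_def using ds_gt[OF _ that(2) yC] y0[OF i1(6) i1(3)] by simp
      ultimately show ?thesis unfolding w_def using that by (simp add: R2.minus_eq)
    qed
    have wN: "d (Suc (Suc (Suc k))) i w = \<zero>\<^bsub>R (Suc (Suc k))\<^esub>" if "1 \<le> i" "i \<le> Suc (Suc (Suc k))" for i
    proof -
      have "i = 1 \<or> i = 2 \<or> 3 \<le> i" using that by auto
      then show ?thesis using w1 w2 w3 that by auto
    qed
    have zC: "C' \<otimes>\<^bsub>R (Suc (Suc (Suc k)))\<^esub> w \<in> carrier (R (Suc (Suc (Suc k))))" by simp
    have zN: "C' \<otimes>\<^bsub>R (Suc (Suc (Suc k)))\<^esub> w \<in> normalized R d (Suc (Suc (Suc k)))"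
      unfolding normalized_def using zC wN by simp
    have dC'0: "d (Suc (Suc (Suc k))) 0 C' = C"
      unfolding C'_def using ds_lt[of 0 2 "Suc k" C] dC0 CC unfolding C_def by simp
    have "d (Suc (Suc (Suc k))) 0 P = s (Suc k) 0 a"
      unfolding P_def using ds_lt[of 0 1 "Suc k" "s (Suc k) 0 a"] ds_eq1[of 0 "Suc k" a] by simp
    moreover have "d (Suc (Suc (Suc k))) 0 Y2 = s (Suc k) 1 b"
      unfolding Y2_def using ds_lt[of 0 2 "Suc k" y] yb by simp
    moreover have "d (Suc (Suc (Suc k))) 0 Y1 = s (Suc k) 0 b"
      unfolding Y1_def using ds_lt[of 0 1 "Suc k" y] yb by simp
    moreover have "d (Suc (Suc (Suc k))) 0 Q = s (Suc k) 1 a"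
      unfolding Q_def using ds_lt[of 0 2 "Suc k" "s (Suc k) 0 a"] ds_eq1[of 0 "Suc k" a] by simp
    moreover have "d (Suc (Suc (Suc k))) 0 Y0 = y" unfolding Y0_def by (simp add: ds_eq1)
    moreover have "d (Suc (Suc (Suc k))) 0 T = s (Suc k) 1 (s k 0 (d (Suc k) 0 a))"
      unfolding T_def using ds_lt[of 0 2 "Suc k" "s (Suc k) 1 a"] ds_lt[of 0 1 k a] by simp
    ultimately have dw0: "d (Suc (Suc (Suc k))) 0 w = m \<oplus>\<^bsub>R (Suc (Suc k))\<^esub> y \<otimes>\<^bsub>R (Suc (Suc k))\<^esub> s (Suc k) 1 (s k 0 (d (Suc k) 0 a))"
      unfolding w_def m_def mprod_def by simp
    have ct: "C \<otimes>\<^bsub>R (Suc (Suc k))\<^esub> s (Suc k) 1 (s k 0 (d (Suc k) 0 a)) = \<zero>\<^bsub>R (Suc (Suc k))\<^esub>"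
      unfolding C_def using ha cC by (simp flip: s_mult add: R0.m_comm)
    have "d (Suc (Suc (Suc k))) 0 (C' \<otimes>\<^bsub>R (Suc (Suc (Suc k)))\<^esub> w) = C \<otimes>\<^bsub>R (Suc (Suc k))\<^esub> m"
      using dC'0 dw0 ct cC by (simp add: R2.H5)
    then show "is_boundary R d (Suc (Suc k)) (C \<otimes>\<^bsub>R (Suc (Suc k))\<^esub> m)"
      unfolding is_boundary_def using zN by blast
  qed
  show ?thesis using P1 P2 P3 unfolding C_def m_def by blast
qed

end

theorem lemma3p2:
  fixes R :: "nat \<Rightarrow> ('a, 'b) ring_scheme"
    and d s :: "nat \<Rightarrow> nat \<Rightarrow> 'a \<Rightarrow> 'a"
    and n :: nat and a b c :: 'a
  assumes "simplicial_cring R d s"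
    and "1 \<le> n"
    and "a \<in> normalized R d n" and "b \<in> normalized R d n"
    and "c \<in> carrier (R (n - 1))"
  shows "s n 1 (s (n - 1) 0 c) \<otimes>\<^bsub>R (Suc n)\<^esub> mprod R s n a b \<in> normalized R d (Suc n) \<and>
         (d n 0 a \<otimes>\<^bsub>R (n - 1)\<^esub> c = \<zero>\<^bsub>R (n - 1)\<^esub> \<longrightarrow>
         d n 0 b \<otimes>\<^bsub>R (n - 1)\<^esub> c = \<zero>\<^bsub>R (n - 1)\<^esub> \<longrightarrow>
         is_cycle R d (Suc n) (s n 1 (s (n - 1) 0 c) \<otimes>\<^bsub>R (Suc n)\<^esub> mprod R s n a b)) \<and>
         (d n 0 a \<otimes>\<^bsub>R (n - 1)\<^esub> c = \<zero>\<^bsub>R (n - 1)\<^esub> \<longrightarrow>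
         is_boundary R d n b \<longrightarrow>
         is_boundary R d (Suc n) (s n 1 (s (n - 1) 0 c) \<otimes>\<^bsub>R (Suc n)\<^esub> mprod R s n a b))"
proof -
  interpret scr R d s by (rule scr.intro) (rule assms(1))
  obtain k where n: "n = Suc k" using assms(2) by (cases n) auto
  have aN: "a \<in> normalized R d (Suc k)" using assms(3) n by simp
  have bN: "b \<in> normalized R d (Suc k)" using assms(4) n by simp
  have cC: "c \<in> carrier (R k)" using assms(5) n by simp
  show ?thesis unfolding n diff_Suc_1 by (rule main[OF aN bN cC])
qed

end
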